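(* Let $(Z',d)$ be a metric space and $\gamma:S^1\to Z'$ an injective Lipschitz curve. Then there is a Lipschitz map $\pi=(\pi_1,\pi_2):Z'\to\mathbb{R}^2$ such that $A(\pi\circ\gamma)\neq 0$.
   Context: $S^1$ is identified with $[0,2\pi]$ with endpoints glued. For a Lipschitz closed curve $\eta=(\eta_1,\eta_2):S^1\to\mathbb{R}^2$, its signed area is $A(\eta)=\int_{S^1}\eta_1(t)\eta_2'(t)\,dt$. *)

theory Defs
  imports "HOL-Analysis.Analysis"
begin

text \<open>Closed curves on S^1 are represented as functions on real, parametrised by
  the interval [0, 2 pi] with the endpoints glued (eta 0 = eta (2 pi)).
  For a Lipschitz curve the derivative exists almost everywhere, so the
  value of deriv on the exceptional null set does not affect the integral.\<close>

definition signed_area :: "(real \<Rightarrow> real \<times> real) \<Rightarrow> real" where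
  "signed_area \<eta> = integral {0..2*pi} (\<lambda>t. fst (\<eta> t) * deriv (\<lambda>s. snd (\<eta> s)) t)"

end

theory Submission
  imports Defs
begin


lemma AC_bounded_interval:
  fixes F :: "real \<Rightarrow> real"
  assumes mono: "\<And>x y. x \<le> y \<Longrightarrow> F x \<le> F y" and cont: "continuous_on UNIV F"
    and lip: "\<And>x y. x \<le> y \<Longrightarrow> F y - F x \<le> M * (y - x)" and M: "0 \<le> M"
    and I: "is_interval I" "bounded I"
  shows "emeasure (interval_measure F) I \<le> ennreal M * emeasure lborel I"
proof (cases "I = {}")
  case True then show ?thesis by simp
next
  case False
  define a where "a = Inf I"
  define b where "b = Sup I"
  have bb: "bdd_below I" "bdd_above I" using I(2) by (auto simp: bounded_imp_bdd_below bounded_imp_bdd_above)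
  have sub: "I \<subseteq> {a..b}" using bb False by (auto simp: a_def b_def intro: cInf_lower cSup_upper)
  then have ab: "a \<le> b" using False by auto
  have sub2: "{a<..<b} \<subseteq> I"
  proof
    fix x assume x: "x \<in> {a<..<b}"
    then obtain y where y: "y \<in> I" "y < x" using cInf_less_iff[OF False bb(1)] a_def by auto
    obtain z where z: "z \<in> I" "x < z" using x less_cSup_iff[OF False bb(2)] b_def by auto
    show "x \<in> I" using I(1) y z unfolding is_interval_1 by (meson less_imp_le)
  qed
  have Ib: "I \<in> sets borel" by (rule real_interval_borel_measurable[OF I(1)])
  have "emeasure (interval_measure F) I \<le> emeasure (interval_measure F) {a..b}"
    by (rule emeasure_mono[OF sub]) simp
  also have "\<dots> = ennreal (F b - F a)"
    by (rule emeasure_interval_measure_Icc[OF ab mono cont])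
  also have "\<dots> \<le> ennreal (M * (b - a))" using lip[OF ab] by (rule ennreal_leI)
  also have "\<dots> = ennreal M * emeasure lborel {a<..<b}" using ab M by (simp add: ennreal_mult)
  also have "\<dots> \<le> ennreal M * emeasure lborel I"
    by (intro mult_left_mono emeasure_mono[OF sub2]) (use Ib in auto)
  finally show ?thesis .
qed

lemma AC_interval:
  fixes F :: "real \<Rightarrow> real"
  assumes mono: "\<And>x y. x \<le> y \<Longrightarrow> F x \<le> F y" and cont: "continuous_on UNIV F"
    and lip: "\<And>x y. x \<le> y \<Longrightarrow> F y - F x \<le> M * (y - x)" and M: "0 \<le> M"
    and I: "is_interval I"
  shows "emeasure (interval_measure F) I \<le> ennreal M * emeasure lborel I"
proof -
  define J where "J n = I \<inter> {- real n .. real n}" for n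
  have Jb: "J n \<in> sets borel" for n
    unfolding J_def using real_interval_borel_measurable[OF I] by auto
  have inc: "incseq J" unfolding J_def incseq_def by auto
  have U: "(\<Union>n. J n) = I" unfolding J_def by (auto, meson abs_le_iff real_arch_simple order_trans minus_le_iff)
  have "(SUP n. emeasure (interval_measure F) (J n)) = emeasure (interval_measure F) (\<Union>n. J n)"
    by (rule SUP_emeasure_incseq) (use inc Jb in auto)
  then have "emeasure (interval_measure F) I = (SUP n. emeasure (interval_measure F) (J n))"
    using U by simp
  also have "\<dots> \<le> ennreal M * emeasure lborel I"
  proof (rule SUP_least)
    fix n
    have "emeasure (interval_measure F) (J n) \<le> ennreal M * emeasure lborel (J n)"
      by (rule AC_bounded_interval[OF mono cont lip M]) (auto simp: J_def intro!: is_interval_Int I is_interval_cc bounded_Int)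
    also have "\<dots> \<le> ennreal M * emeasure lborel I"
      by (intro mult_left_mono emeasure_mono) (auto simp: J_def real_interval_borel_measurable[OF I])
    finally show "emeasure (interval_measure F) (J n) \<le> ennreal M * emeasure lborel I" .
  qed
  finally show ?thesis .
qed



lemma AC_open:
  fixes F :: "real \<Rightarrow> real"
  assumes mono: "\<And>x y. x \<le> y \<Longrightarrow> F x \<le> F y" and cont: "continuous_on UNIV F"
    and lip: "\<And>x y. x \<le> y \<Longrightarrow> F y - F x \<le> M * (y - x)" and M: "0 \<le> M"
    and U: "open U"
  shows "emeasure (interval_measure F) U \<le> ennreal M * emeasure lborel U"
proof -
  let ?C = "components U"
  have opn: "\<And>C. C \<in> ?C \<Longrightarrow> open C" using U open_components by blast
  have pw: "pairwise disjnt ?C" using pairwise_disjoint_components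
    by (simp add: pairwise_def disjnt_def)
  have cC: "countable ?C" by (rule countable_disjoint_open_subsets[OF opn pw])
  have df: "disjoint_family_on id ?C" using pw by (auto simp: disjoint_family_on_def pairwise_def disjnt_def)
  have Cb: "\<And>C. C \<in> ?C \<Longrightarrow> C \<in> sets borel" using opn by auto
  have "emeasure (interval_measure F) U = emeasure (interval_measure F) (\<Union>(id ` ?C))" by simp
  also have "\<dots> = (\<integral>\<^sup>+C. emeasure (interval_measure F) (id C) \<partial>count_space ?C)"
    by (rule emeasure_UN_countable[OF _ cC df]) (use Cb in auto)
  also have "\<dots> \<le> (\<integral>\<^sup>+C. ennreal M * emeasure lborel (id C) \<partial>count_space ?C)"
  proof (rule nn_integral_mono)
    fix C assume "C \<in> space (count_space ?C)"
    then have "C \<in> ?C" by simp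
    then have "is_interval C" using in_components_connected is_interval_connected_1 by blast
    then show "emeasure (interval_measure F) (id C) \<le> ennreal M * emeasure lborel (id C)"
      using AC_interval[OF mono cont lip M] by simp
  qed
  also have "\<dots> = ennreal M * (\<integral>\<^sup>+C. emeasure lborel (id C) \<partial>count_space ?C)"
    by (rule nn_integral_cmult) simp
  also have "(\<integral>\<^sup>+C. emeasure lborel (id C) \<partial>count_space ?C) = emeasure lborel (\<Union>(id ` ?C))"
    by (rule emeasure_UN_countable[symmetric, OF _ cC df]) (use Cb in auto)
  finally show ?thesis by simp
qed

lemma AC_borel:
  fixes F :: "real \<Rightarrow> real"
  assumes mono: "\<And>x y. x \<le> y \<Longrightarrow> F x \<le> F y" and cont: "continuous_on UNIV F"
    and lip: "\<And>x y. x \<le> y \<Longrightarrow> F y - F x \<le> M * (y - x)" and M: "0 < M"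
    and A: "A \<in> sets borel"
  shows "emeasure (interval_measure F) A \<le> ennreal M * emeasure lborel A"
proof (rule ennreal_le_epsilon)
  fix e :: real assume fin: "ennreal M * emeasure lborel A < top" and e: "0 < e"
  have Al: "A \<in> sets lebesgue" using A by simp
  obtain T where T: "open T" "A \<subseteq> T" "emeasure lebesgue (T - A) < ennreal (e / M)"
    using sets_lebesgue_outer_open[OF Al, of "e/M"] e M by (metis divide_pos_pos)
  have TA: "T - A \<in> sets borel" using T(1) A by auto
  have eq: "emeasure lebesgue (T - A) = emeasure lborel (T - A)"
    using TA by (simp add: emeasure_completion)
  have sub: "emeasure lborel T \<le> emeasure lborel A + emeasure lborel (T - A)"
  proof -
    have "T = A \<union> (T - A)" using T(2) by auto
    then have "emeasure lborel T = emeasure lborel (A \<union> (T - A))" by simp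
    also have "\<dots> \<le> emeasure lborel A + emeasure lborel (T - A)"
      by (rule emeasure_subadditive) (use A TA in auto)
    finally show ?thesis .
  qed
  have m2: "ennreal M * emeasure lborel (T - A) \<le> ennreal M * ennreal (e / M)"
    using T(3) eq by (intro mult_left_mono) auto
  have m3: "ennreal M * ennreal (e / M) = ennreal e"
    by (subst ennreal_mult[symmetric]) (use M e in auto)
  have "emeasure (interval_measure F) A \<le> emeasure (interval_measure F) T"
    by (rule emeasure_mono[OF T(2)]) (use T(1) in auto)
  also have "\<dots> \<le> ennreal M * emeasure lborel T"
    using AC_open[OF mono cont lip _ T(1)] M by simp
  also have "\<dots> \<le> ennreal M * (emeasure lborel A + emeasure lborel (T - A))"
    using sub by (rule mult_left_mono) simp
  also have "\<dots> = ennreal M * emeasure lborel A + ennreal M * emeasure lborel (T - A)"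
    by (simp add: distrib_left)
  also have "\<dots> \<le> ennreal M * emeasure lborel A + ennreal e"
    using m2 m3 by (metis add_left_mono)
  finally show "emeasure (interval_measure F) A \<le> ennreal M * emeasure lborel A + ennreal e" .
qed



lemma vitali_intervals:
  fixes E U :: "real set" and P :: "real \<Rightarrow> real \<Rightarrow> bool"
  assumes U: "open U" "E \<subseteq> U"
    and hyp: "\<And>x d. x \<in> E \<Longrightarrow> 0 < d \<Longrightarrow> \<exists>a b. a \<le> x \<and> x \<le> b \<and> a < b \<and> b - a < d \<and> P a b"
  obtains C where "countable C" "\<And>p. p \<in> C \<Longrightarrow> fst p < snd p \<and> {fst p..snd p} \<subseteq> U \<and> P (fst p) (snd p)"
    "disjoint_family_on (\<lambda>p. {fst p..snd p}) C"
    "negligible (E - (\<Union>p\<in>C. {fst p..snd p}))"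
proof -
  define K where "K = {p. fst p < snd p \<and> {fst p..snd p} \<subseteq> U \<and> P (fst p) (snd p)}"
  define c where "c p = (fst p + snd p) / 2" for p :: "real \<times> real"
  define \<rho> where "\<rho> p = (snd p - fst p) / 2" for p :: "real \<times> real"
  have cb: "cball (c p) (\<rho> p) = {fst p..snd p}" for p
    by (simp add: cball_eq_atLeastAtMost c_def \<rho>_def field_simps)
  have rpos: "\<And>i. i \<in> K \<Longrightarrow> 0 < \<rho> i" by (auto simp: K_def \<rho>_def)
  have cov: "\<exists>i. i \<in> K \<and> x \<in> cball (c i) (\<rho> i) \<and> \<rho> i < d" if x: "x \<in> E" and d: "0 < d" for x d
  proof -
    obtain \<delta> where \<delta>: "\<delta> > 0" "ball x \<delta> \<subseteq> U" using U x open_contains_ball by blast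
    obtain a b where ab: "a \<le> x" "x \<le> b" "a < b" "b - a < min d \<delta>" "P a b"
      using hyp[OF x, of "min d \<delta>"] d \<delta> by auto
    have "{a..b} \<subseteq> ball x \<delta>" using ab by (auto simp: dist_real_def)
    then have "(a,b) \<in> K" using ab \<delta> by (auto simp: K_def)
    moreover have "x \<in> cball (c (a,b)) (\<rho> (a,b))" using ab by (simp add: cb)
    moreover have "\<rho> (a,b) < d" using ab by (simp add: \<rho>_def)
    ultimately show ?thesis by blast
  qed
  obtain C where C: "countable C" "C \<subseteq> K"
     "pairwise (\<lambda>i j. disjnt (cball (c i) (\<rho> i)) (cball (c j) (\<rho> j))) C"
     "negligible(E - (\<Union>i \<in> C. cball (c i) (\<rho> i)))"
    using Vitali_covering_theorem_cballs[of K \<rho> E c, OF rpos cov] by blast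
  show ?thesis
  proof (rule that[OF C(1)])
    show "\<And>p. p \<in> C \<Longrightarrow> fst p < snd p \<and> {fst p..snd p} \<subseteq> U \<and> P (fst p) (snd p)"
      using C(2) by (auto simp: K_def)
    show "disjoint_family_on (\<lambda>p. {fst p..snd p}) C"
      using C(3) by (auto simp: disjoint_family_on_def pairwise_def disjnt_def cb)
    show "negligible (E - (\<Union>p\<in>C. {fst p..snd p}))" using C(4) by (simp add: cb)
  qed
qed

lemma V1:
  fixes F :: "real \<Rightarrow> real"
  assumes mono: "\<And>x y. x \<le> y \<Longrightarrow> F x \<le> F y" and cont: "continuous_on UNIV F"
    and lip: "\<And>x y. x \<le> y \<Longrightarrow> F y - F x \<le> M * (y - x)" and M: "0 < M"
    and E: "E \<in> sets borel" "emeasure lborel E < \<infinity>" and r: "0 \<le> r"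
    and hyp: "\<And>x d. x \<in> E \<Longrightarrow> 0 < d \<Longrightarrow> \<exists>a b. a \<le> x \<and> x \<le> b \<and> a < b \<and> b - a < d \<and> F b - F a \<le> r * (b - a)"
  shows "emeasure (interval_measure F) E \<le> ennreal r * emeasure lborel E"
proof (rule ennreal_le_epsilon)
  fix e :: real assume e: "0 < e"
  have El: "E \<in> sets lebesgue" using E by simp
  obtain U where U: "open U" "E \<subseteq> U" "emeasure lebesgue (U - E) < ennreal (e / (r + 1))"
    using sets_lebesgue_outer_open[OF El, of "e/(r+1)"] e r by (metis add_nonneg_pos divide_pos_pos zero_less_one)
  obtain C where C: "countable C" "\<And>p. p \<in> C \<Longrightarrow> fst p < snd p \<and> {fst p..snd p} \<subseteq> U \<and> F (snd p) - F (fst p) \<le> r * (snd p - fst p)"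
    "disjoint_family_on (\<lambda>p. {fst p..snd p}) C"
    "negligible (E - (\<Union>p\<in>C. {fst p..snd p}))"
    using vitali_intervals[OF U(1,2), of "\<lambda>a b. F b - F a \<le> r * (b - a)"] hyp by blast
  define W where "W = (\<Union>p\<in>C. {fst p..snd p})"
  have Wb: "W \<in> sets borel" unfolding W_def by (rule sets.countable_UN''[OF C(1)]) auto
  have UEb: "U - E \<in> sets borel" using U(1) E(1) by auto
  have EWb: "E - W \<in> sets borel" using Wb E(1) by auto
  have EW0: "emeasure lborel (E - W) = 0"
  proof -
    have "emeasure lebesgue (E - W) = 0"
      using C(4) EWb by (subst negligible_iff_emeasure0[symmetric]) (auto simp: W_def)
    then show ?thesis using EWb by simp
  qed
  have nuW: "emeasure (interval_measure F) W = (\<integral>\<^sup>+p. emeasure (interval_measure F) {fst p..snd p} \<partial>count_space C)"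
    unfolding W_def by (rule emeasure_UN_countable[OF _ C(1) C(3)]) auto
  have laW: "emeasure lborel W = (\<integral>\<^sup>+p. emeasure lborel {fst p..snd p} \<partial>count_space C)"
    unfolding W_def by (rule emeasure_UN_countable[OF _ C(1) C(3)]) auto
  have WU: "W \<subseteq> U" using C(2) by (auto simp: W_def)
  have "emeasure (interval_measure F) E \<le> emeasure (interval_measure F) (W \<union> (E - W))"
    by (rule emeasure_mono) (use Wb EWb E(1) in auto)
  also have "\<dots> \<le> emeasure (interval_measure F) W + emeasure (interval_measure F) (E - W)"
    by (rule emeasure_subadditive) (use Wb EWb in auto)
  also have "emeasure (interval_measure F) (E - W) = 0"
  proof -
    have "emeasure (interval_measure F) (E - W) \<le> ennreal M * emeasure lborel (E - W)"
      by (rule AC_borel[OF mono cont lip M EWb])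
    then show ?thesis using EW0 by simp
  qed
  also have "emeasure (interval_measure F) W \<le> (\<integral>\<^sup>+p. ennreal r * emeasure lborel {fst p..snd p} \<partial>count_space C)"
    unfolding nuW
  proof (rule nn_integral_mono)
    fix p assume "p \<in> space (count_space C)"
    then have p: "fst p < snd p" "F (snd p) - F (fst p) \<le> r * (snd p - fst p)" using C(2) by auto
    have "emeasure (interval_measure F) {fst p..snd p} = ennreal (F (snd p) - F (fst p))"
      using p by (intro emeasure_interval_measure_Icc mono cont) auto
    also have "\<dots> \<le> ennreal (r * (snd p - fst p))" using p by (intro ennreal_leI) auto
    also have "\<dots> = ennreal r * emeasure lborel {fst p..snd p}"
      using p r by (simp add: ennreal_mult)
    finally show "emeasure (interval_measure F) {fst p..snd p} \<le> ennreal r * emeasure lborel {fst p..snd p}" .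
  qed
  also have "\<dots> = ennreal r * emeasure lborel W"
    unfolding laW by (rule nn_integral_cmult) simp
  also have "emeasure lborel W \<le> emeasure lborel U"
    by (rule emeasure_mono[OF WU]) (use U(1) in auto)
  also have "emeasure lborel U \<le> emeasure lborel E + emeasure lborel (U - E)"
  proof -
    have "U = E \<union> (U - E)" using U(2) by auto
    then have "emeasure lborel U = emeasure lborel (E \<union> (U - E))" by simp
    also have "\<dots> \<le> emeasure lborel E + emeasure lborel (U - E)"
      by (rule emeasure_subadditive) (use E(1) UEb in auto)
    finally show ?thesis .
  qed
  also have "emeasure lborel (U - E) \<le> ennreal (e / (r + 1))"
    using U(3) UEb by simp
  finally have "emeasure (interval_measure F) E \<le> ennreal r * (emeasure lborel E + ennreal (e / (r + 1)))"
    by (simp add: mult_left_mono)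
  also have "\<dots> = ennreal r * emeasure lborel E + ennreal (r * (e / (r + 1)))"
  proof -
    have "ennreal r * ennreal (e / (r + 1)) = ennreal (r * (e / (r + 1)))"
      using r e by (intro ennreal_mult[symmetric]) auto
    then show ?thesis by (simp add: distrib_left)
  qed
  also have "ennreal (r * (e / (r + 1))) \<le> ennreal e"
  proof (rule ennreal_leI)
    have "r * (e / (r + 1)) = e * (r / (r + 1))" by simp
    also have "\<dots> \<le> e * 1" using r e by (intro mult_left_mono) auto
    finally show "r * (e / (r + 1)) \<le> e" by simp
  qed
  finally show "emeasure (interval_measure F) E \<le> ennreal r * emeasure lborel E + ennreal e"
    by (simp add: add_left_mono)
qed


lemma V2:
  fixes F :: "real \<Rightarrow> real"
  assumes mono: "\<And>x y. x \<le> y \<Longrightarrow> F x \<le> F y" and cont: "continuous_on UNIV F"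
    and lip: "\<And>x y. x \<le> y \<Longrightarrow> F y - F x \<le> M * (y - x)" and M: "0 < M"
    and E: "E \<in> sets borel" "emeasure lborel E < \<infinity>" and s: "0 \<le> s"
    and hyp: "\<And>x d. x \<in> E \<Longrightarrow> 0 < d \<Longrightarrow> \<exists>a b. a \<le> x \<and> x \<le> b \<and> a < b \<and> b - a < d \<and> s * (b - a) \<le> F b - F a"
  shows "ennreal s * emeasure lborel E \<le> emeasure (interval_measure F) E"
proof (rule ennreal_le_epsilon)
  fix e :: real assume e: "0 < e"
  have El: "E \<in> sets lebesgue" using E by simp
  obtain U where U: "open U" "E \<subseteq> U" "emeasure lebesgue (U - E) < ennreal (e / M)"
    using sets_lebesgue_outer_open[OF El, of "e/M"] e M by (metis divide_pos_pos)
  obtain C where C: "countable C" "\<And>p. p \<in> C \<Longrightarrow> fst p < snd p \<and> {fst p..snd p} \<subseteq> U \<and> s * (snd p - fst p) \<le> F (snd p) - F (fst p)"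
    "disjoint_family_on (\<lambda>p. {fst p..snd p}) C"
    "negligible (E - (\<Union>p\<in>C. {fst p..snd p}))"
    using vitali_intervals[OF U(1,2), of "\<lambda>a b. s * (b - a) \<le> F b - F a"] hyp by blast
  define W where "W = (\<Union>p\<in>C. {fst p..snd p})"
  have Wb: "W \<in> sets borel" unfolding W_def by (rule sets.countable_UN''[OF C(1)]) auto
  have UEb: "U - E \<in> sets borel" using U(1) E(1) by auto
  have EWb: "E - W \<in> sets borel" using Wb E(1) by auto
  have EW0: "emeasure lborel (E - W) = 0"
  proof -
    have "emeasure lebesgue (E - W) = 0"
      using C(4) EWb by (subst negligible_iff_emeasure0[symmetric]) (auto simp: W_def)
    then show ?thesis using EWb by simp
  qed
  have nuW: "emeasure (interval_measure F) W = (\<integral>\<^sup>+p. emeasure (interval_measure F) {fst p..snd p} \<partial>count_space C)"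
    unfolding W_def by (rule emeasure_UN_countable[OF _ C(1) C(3)]) auto
  have laW: "emeasure lborel W = (\<integral>\<^sup>+p. emeasure lborel {fst p..snd p} \<partial>count_space C)"
    unfolding W_def by (rule emeasure_UN_countable[OF _ C(1) C(3)]) auto
  have WU: "W \<subseteq> U" using C(2) by (auto simp: W_def)
  have "emeasure lborel E \<le> emeasure lborel (W \<union> (E - W))"
    by (rule emeasure_mono) (use Wb EWb E(1) in auto)
  also have "\<dots> \<le> emeasure lborel W + emeasure lborel (E - W)"
    by (rule emeasure_subadditive) (use Wb EWb in auto)
  finally have "emeasure lborel E \<le> emeasure lborel W" using EW0 by simp
  then have "ennreal s * emeasure lborel E \<le> ennreal s * emeasure lborel W"
    by (rule mult_left_mono) simp
  also have "\<dots> = (\<integral>\<^sup>+p. ennreal s * emeasure lborel {fst p..snd p} \<partial>count_space C)"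
    unfolding laW by (rule nn_integral_cmult[symmetric]) simp
  also have "\<dots> \<le> emeasure (interval_measure F) W"
    unfolding nuW
  proof (rule nn_integral_mono)
    fix p assume "p \<in> space (count_space C)"
    then have p: "fst p < snd p" "s * (snd p - fst p) \<le> F (snd p) - F (fst p)" using C(2) by auto
    have "ennreal s * emeasure lborel {fst p..snd p} = ennreal (s * (snd p - fst p))"
      using p s by (simp add: ennreal_mult)
    also have "\<dots> \<le> ennreal (F (snd p) - F (fst p))" using p by (intro ennreal_leI) auto
    also have "\<dots> = emeasure (interval_measure F) {fst p..snd p}"
      using p by (intro emeasure_interval_measure_Icc[symmetric] mono cont) auto
    finally show "ennreal s * emeasure lborel {fst p..snd p} \<le> emeasure (interval_measure F) {fst p..snd p}" .
  qed
  also have "\<dots> \<le> emeasure (interval_measure F) U"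
    by (rule emeasure_mono[OF WU]) (use U(1) in auto)
  also have "\<dots> \<le> emeasure (interval_measure F) E + emeasure (interval_measure F) (U - E)"
  proof -
    have "U = E \<union> (U - E)" using U(2) by auto
    then have "emeasure (interval_measure F) U = emeasure (interval_measure F) (E \<union> (U - E))" by simp
    also have "\<dots> \<le> emeasure (interval_measure F) E + emeasure (interval_measure F) (U - E)"
      by (rule emeasure_subadditive) (use E(1) UEb in auto)
    finally show ?thesis .
  qed
  also have "emeasure (interval_measure F) (U - E) \<le> ennreal e"
  proof -
    have "emeasure (interval_measure F) (U - E) \<le> ennreal M * emeasure lborel (U - E)"
      by (rule AC_borel[OF mono cont lip M UEb])
    also have "\<dots> \<le> ennreal M * ennreal (e / M)"
      using U(3) UEb by (intro mult_left_mono) auto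
    also have "\<dots> = ennreal e"
      by (subst ennreal_mult[symmetric]) (use M e in auto)
    finally show ?thesis .
  qed
  finally show "ennreal s * emeasure lborel E \<le> emeasure (interval_measure F) E + ennreal e"
    by (simp add: add_left_mono)
qed



lemma frequently_at_right_0_D:
  fixes P :: "real \<Rightarrow> bool"
  assumes "frequently P (at_right 0)" "0 < d"
  shows "\<exists>h. 0 < h \<and> h < d \<and> P h"
proof (rule ccontr)
  assume "\<not> ?thesis"
  then have "eventually (\<lambda>h. \<not> P h) (at_right 0)"
    unfolding eventually_at_right_field using assms(2) by auto
  then show False using assms(1) by (simp add: frequently_def)
qed

lemma frequently_at_right_0_rat:
  fixes \<phi> :: "real \<Rightarrow> real"
  assumes cont: "continuous_on {0<..} \<phi>"
  shows "frequently (\<lambda>h. 0 < \<phi> h) (at_right 0) \<longleftrightarrow>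
         (\<forall>n::nat. \<exists>h\<in>\<rat>. 0 < h \<and> h < inverse (real (Suc n)) \<and> 0 < \<phi> h)"
proof
  assume fr: "frequently (\<lambda>h. 0 < \<phi> h) (at_right 0)"
  show "\<forall>n::nat. \<exists>h\<in>\<rat>. 0 < h \<and> h < inverse (real (Suc n)) \<and> 0 < \<phi> h"
  proof
    fix n :: nat
    obtain h where h: "0 < h" "h < inverse (real (Suc n))" "0 < \<phi> h"
      using frequently_at_right_0_D[OF fr, of "inverse (real (Suc n))"] by auto
    obtain A where A: "open A" "A \<inter> {0<..} = {x\<in>{0<..}. 0 < \<phi> x}"
      using open_Collect_positive[OF cont] by blast
    have "h \<in> A \<inter> {0<..<inverse (real (Suc n))}" using A h by auto
    moreover have "open (A \<inter> {0<..<inverse (real (Suc n))})" using A(1) by auto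
    ultimately obtain \<epsilon> where \<epsilon>: "\<epsilon> > 0" "ball h \<epsilon> \<subseteq> A \<inter> {0<..<inverse (real (Suc n))}"
      using open_contains_ball by blast
    obtain q where q: "q \<in> \<rat>" "h < q" "q < h + \<epsilon>" using Rats_dense_in_real[of h "h + \<epsilon>"] \<epsilon> by auto
    have "q \<in> ball h \<epsilon>" using q by (auto simp: dist_real_def)
    then have "q \<in> A \<inter> {0<..<inverse (real (Suc n))}" using \<epsilon> by blast
    then show "\<exists>h\<in>\<rat>. 0 < h \<and> h < inverse (real (Suc n)) \<and> 0 < \<phi> h"
      using q A by auto
  qed
next
  assume R: "\<forall>n::nat. \<exists>h\<in>\<rat>. 0 < h \<and> h < inverse (real (Suc n)) \<and> 0 < \<phi> h"
  show "frequently (\<lambda>h. 0 < \<phi> h) (at_right 0)"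
    unfolding frequently_def
  proof
    assume "eventually (\<lambda>h. \<not> 0 < \<phi> h) (at_right 0)"
    then obtain b where b: "b > 0" "\<And>y. y > 0 \<Longrightarrow> y < b \<Longrightarrow> \<not> 0 < \<phi> y"
      unfolding eventually_at_right_field by auto
    obtain n where n: "inverse (real (Suc n)) < b" using reals_Archimedean[OF b(1)] by auto
    obtain h where "0 < h" "h < inverse (real (Suc n))" "0 < \<phi> h" using R by blast
    then show False using b n by auto
  qed
qed

lemma borel_rat_set:
  fixes \<psi> :: "real \<Rightarrow> real \<Rightarrow> real"
  assumes cont: "\<And>h. continuous_on UNIV (\<psi> h)"
  shows "{x. \<forall>n::nat. \<exists>h\<in>\<rat>. 0 < h \<and> h < inverse (real (Suc n)) \<and> 0 < \<psi> h x} \<in> sets borel"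
proof -
  have op: "open {x. 0 < \<psi> h x}" for h
    using open_Collect_positive[OF cont[of h]] by auto
  have eq: "{x. \<forall>n::nat. \<exists>h\<in>\<rat>. 0 < h \<and> h < inverse (real (Suc n)) \<and> 0 < \<psi> h x}
     = (\<Inter>n. \<Union>h\<in>\<rat> \<inter> {0<..<inverse (real (Suc n))}. {x. 0 < \<psi> h x})"
    by (rule set_eqI) (simp only: mem_Collect_eq INT_iff UN_iff Int_iff greaterThanLessThan_iff Bex_def iff_conv_conj_imp conj_assoc, blast)
  have "(\<Union>h\<in>\<rat> \<inter> {0<..<inverse (real (Suc n))}. {x. 0 < \<psi> h x}) \<in> sets borel" for n
  proof (rule sets.countable_UN'')
    show "countable (\<rat> \<inter> {0<..<inverse (real (Suc n))})" by (rule countable_Int1[OF countable_rat])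
    fix h show "{x. 0 < \<psi> h x} \<in> sets borel" using op[of h] by (rule borel_open)
  qed
  then have "(\<Inter>n. \<Union>h\<in>\<rat> \<inter> {0<..<inverse (real (Suc n))}. {x. 0 < \<psi> h x}) \<in> sets borel"
    by (intro sets.countable_INT) auto
  then show ?thesis unfolding eq .
qed


lemma null_from_V:
  fixes F :: "real \<Rightarrow> real"
  assumes mono: "\<And>x y. x \<le> y \<Longrightarrow> F x \<le> F y" and cont: "continuous_on UNIV F"
    and lip: "\<And>x y. x \<le> y \<Longrightarrow> F y - F x \<le> M * (y - x)" and M: "0 < M"
    and E: "E \<in> sets borel" and rs: "0 < r" "r < s"
    and h1: "\<And>x d. x \<in> E \<Longrightarrow> 0 < d \<Longrightarrow> \<exists>a b. a \<le> x \<and> x \<le> b \<and> a < b \<and> b - a < d \<and> F b - F a \<le> r * (b - a)"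
    and h2: "\<And>x d. x \<in> E \<Longrightarrow> 0 < d \<Longrightarrow> \<exists>a b. a \<le> x \<and> x \<le> b \<and> a < b \<and> b - a < d \<and> s * (b - a) \<le> F b - F a"
  shows "negligible E"
proof -
  define En where "En n = E \<inter> {- real n .. real n}" for n :: nat
  have Enb: "En n \<in> sets borel" for n using E by (auto simp: En_def)
  have fin: "emeasure lborel (En n) < \<infinity>" for n
  proof -
    have "emeasure lborel (En n) \<le> emeasure lborel {- real n .. real n}"
      by (rule emeasure_mono) (auto simp: En_def)
    also have "\<dots> < \<infinity>" by simp
    finally show ?thesis .
  qed
  have "negligible (En n)" for n
  proof -
    have a: "emeasure (interval_measure F) (En n) \<le> ennreal r * emeasure lborel (En n)"
      by (rule V1[OF mono cont lip M Enb fin]) (use rs h1 in \<open>auto simp: En_def\<close>)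
    have b: "ennreal s * emeasure lborel (En n) \<le> emeasure (interval_measure F) (En n)"
      by (rule V2[OF mono cont lip M Enb fin]) (use rs h2 in \<open>auto simp: En_def\<close>)
    obtain t where t: "emeasure lborel (En n) = ennreal t" "0 \<le> t"
      using fin[of n] by (cases "emeasure lborel (En n)") auto
    have "ennreal (s * t) \<le> ennreal (r * t)"
      using order_trans[OF b a] t rs by (simp add: ennreal_mult)
    then have "s * t \<le> r * t" using rs t by (subst (asm) ennreal_le_iff) auto
    then have "t = 0" using rs t by (metis mult_right_mono not_le order.antisym zero_le_mult_iff mult_le_cancel_right)
    then have "emeasure lebesgue (En n) = 0" using t Enb by simp
    then show ?thesis using Enb by (subst negligible_iff_emeasure0) auto
  qed
  then have "negligible (\<Union>n. En n)" by (rule negligible_Union_nat)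
  moreover have "(\<Union>n. En n) = E"
    by (auto simp: En_def, meson abs_le_iff real_arch_simple order_trans minus_le_iff)
  ultimately show ?thesis by simp
qed



lemma frequently_at_0_split:
  "frequently P (at (0::real)) \<longleftrightarrow> frequently (\<lambda>h. P (-h)) (at_right 0) \<or> frequently P (at_right 0)"
proof -
  have "frequently P (at (0::real)) \<longleftrightarrow> frequently P (at_left 0) \<or> frequently P (at_right 0)"
    by (subst at_eq_sup_left_right) (simp add: frequently_def eventually_sup)
  also have "frequently P (at_left (0::real)) \<longleftrightarrow> frequently (\<lambda>h. P (-h)) (at_right 0)"
    unfolding frequently_def eventually_at_left_to_right by simp
  finally show ?thesis .
qed

lemma diff_point:
  fixes F :: "real \<Rightarrow> real"
  assumes mono: "\<And>x y. x \<le> y \<Longrightarrow> F x \<le> F y"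
    and lip: "\<And>x y. x \<le> y \<Longrightarrow> F y - F x \<le> M * (y - x)"
    and nA: "\<And>r s. r \<in> \<rat> \<Longrightarrow> s \<in> \<rat> \<Longrightarrow> r < s \<Longrightarrow>
       \<not> (frequently (\<lambda>h. F x - F (x - h) < r * h) (at_right 0) \<and> frequently (\<lambda>h. s * h < F (x + h) - F x) (at_right 0))"
    and nB: "\<And>r s. r \<in> \<rat> \<Longrightarrow> s \<in> \<rat> \<Longrightarrow> r < s \<Longrightarrow>
       \<not> (frequently (\<lambda>h. F (x + h) - F x < r * h) (at_right 0) \<and> frequently (\<lambda>h. s * h < F x - F (x - h)) (at_right 0))"
  shows "F differentiable at x"
proof -
  define Q where "Q h = (F (x + h) - F x) / h" for h
  define q where "q h = ereal (Q h)" for h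
  let ?Llt = "\<lambda>c. frequently (\<lambda>h. F x - F (x - h) < c * h) (at_right (0::real))"
  let ?Lgt = "\<lambda>c. frequently (\<lambda>h. c * h < F x - F (x - h)) (at_right (0::real))"
  let ?Rlt = "\<lambda>c. frequently (\<lambda>h. F (x + h) - F x < c * h) (at_right (0::real))"
  let ?Rgt = "\<lambda>c. frequently (\<lambda>h. c * h < F (x + h) - F x) (at_right (0::real))"
  have Qb: "0 \<le> Q h \<and> Q h \<le> M" if "h \<noteq> 0" for h
  proof (cases "h > 0")
    case True
    have "0 \<le> F (x + h) - F x" "F (x + h) - F x \<le> M * h" using mono[of x "x+h"] lip[of x "x+h"] True by auto
    then show ?thesis using True by (simp add: Q_def pos_divide_le_eq)
  next
    case False
    then have h: "h < 0" using that by auto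
    have "F (x + h) - F x \<le> 0" "F x - F (x + h) \<le> M * (- h)" using mono[of "x+h" x] lip[of "x+h" x] h by auto
    then show ?thesis using h by (simp add: Q_def divide_nonpos_neg neg_divide_le_eq)
  qed
  have ev0: "eventually (\<lambda>h. h \<noteq> 0) (at (0::real))" by (simp add: eventually_at_filter)
  have nt: "at (0::real) \<noteq> bot" by simp
  define I where "I = Liminf (at 0) q"
  define S where "S = Limsup (at 0) q"
  have I0: "0 \<le> I" unfolding I_def
    by (rule Liminf_bounded) (use ev0 Qb in \<open>auto simp: q_def elim!: eventually_mono\<close>)
  have SM: "S \<le> ereal M" unfolding S_def
    by (rule Limsup_bounded) (use ev0 Qb in \<open>auto simp: q_def elim!: eventually_mono\<close>)
  have IS: "I \<le> S" unfolding I_def S_def by (rule Liminf_le_Limsup) simp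
  have conv_Rlt: "frequently (\<lambda>h. q h < ereal c) (at_right 0) \<longleftrightarrow> ?Rlt c" for c
    by (rule frequently_cong[OF eventually_at_right_less]) (simp add: q_def Q_def pos_divide_less_eq)
  have conv_Rgt: "frequently (\<lambda>h. ereal c < q h) (at_right 0) \<longleftrightarrow> ?Rgt c" for c
    by (rule frequently_cong[OF eventually_at_right_less]) (simp add: q_def Q_def pos_less_divide_eq)
  have qneg: "Q (-h) = (F x - F (x - h)) / h" for h
    by (simp add: Q_def divide_minus_right) (metis minus_diff_eq divide_minus_left)
  have conv_Llt: "frequently (\<lambda>h. q (-h) < ereal c) (at_right 0) \<longleftrightarrow> ?Llt c" for c
    by (rule frequently_cong[OF eventually_at_right_less]) (simp add: q_def qneg pos_divide_less_eq)
  have conv_Lgt: "frequently (\<lambda>h. ereal c < q (-h)) (at_right 0) \<longleftrightarrow> ?Lgt c" for c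
    by (rule frequently_cong[OF eventually_at_right_less]) (simp add: q_def qneg pos_less_divide_eq)
  have ntr: "at_right (0::real) \<noteq> bot" by simp
  have R12: "?Rlt m2" if "\<not> ?Rgt m1" "m1 < m2" for m1 m2
  proof -
    have "eventually (\<lambda>h. \<not> (m1 * h < F (x + h) - F x)) (at_right 0)" using that(1) by (simp add: not_frequently)
    then have "eventually (\<lambda>h. F (x + h) - F x < m2 * h) (at_right 0)"
      using eventually_at_right_less[of "0::real"]
    proof (eventually_elim)
      case (elim h)
      have "m1 * h < m2 * h" using that(2) elim by (intro mult_strict_right_mono) auto
      then show ?case using elim by linarith
    qed
    then show ?thesis by (rule eventually_frequently[OF ntr])
  qed
  have L12: "?Lgt m1" if "\<not> ?Llt m2" "m1 < m2" for m1 m2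
  proof -
    have "eventually (\<lambda>h. \<not> (F x - F (x - h) < m2 * h)) (at_right 0)" using that(1) by (simp add: not_frequently)
    then have "eventually (\<lambda>h. m1 * h < F x - F (x - h)) (at_right 0)"
      using eventually_at_right_less[of "0::real"]
    proof (eventually_elim)
      case (elim h)
      have "m1 * h < m2 * h" using that(2) elim by (intro mult_strict_right_mono) auto
      then show ?case using elim by linarith
    qed
    then show ?thesis by (rule eventually_frequently[OF ntr])
  qed
  have SI: "S \<le> I"
  proof (rule ccontr)
    assume "\<not> S \<le> I"
    then have lt: "I < S" by simp
    obtain i where i: "I = ereal i" using I0 IS SM by (cases I) auto
    obtain s0 where s0: "S = ereal s0" using I0 IS SM by (cases S) auto
    have "i < s0" using lt i s0 by simp
    then obtain r where r: "r \<in> \<rat>" "i < r" "r < s0" using Rats_dense_in_real by blast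
    then obtain s where s: "s \<in> \<rat>" "r < s" "s < s0" using Rats_dense_in_real by blast
    then obtain m1 where m1: "m1 \<in> \<rat>" "r < m1" "m1 < s" using Rats_dense_in_real by blast
    then obtain m2 where m2: "m2 \<in> \<rat>" "m1 < m2" "m2 < s" using Rats_dense_in_real by blast
    have f1: "frequently (\<lambda>h. q h < ereal r) (at 0)"
    proof (rule ccontr)
      assume "\<not> ?thesis"
      then have "eventually (\<lambda>h. ereal r \<le> q h) (at 0)" by (simp add: not_frequently not_less)
      then have "ereal r \<le> I" unfolding I_def by (rule Liminf_bounded)
      then show False using i r by simp
    qed
    have f2: "frequently (\<lambda>h. ereal s < q h) (at 0)"
    proof (rule ccontr)
      assume "\<not> ?thesis"
      then have "eventually (\<lambda>h. q h \<le> ereal s) (at 0)" by (simp add: not_frequently not_less)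
      then have "S \<le> ereal s" unfolding S_def by (rule Limsup_bounded)
      then show False using s0 s by simp
    qed
    have c1: "?Llt r \<or> ?Rlt r" using f1 conv_Llt conv_Rlt by (simp add: frequently_at_0_split)
    have c2: "?Lgt s \<or> ?Rgt s" using f2 conv_Lgt conv_Rgt by (simp add: frequently_at_0_split)
    show False
    proof (cases "?Llt r")
      case Llt: True
      show False
      proof (cases "?Rgt s")
        case True then show False using nA[OF r(1) s(1) s(2)] Llt by blast
      next
        case False
        then have Lgt: "?Lgt s" using c2 by blast
        show False
        proof (cases "?Rgt m1")
          case True then show False using nA[OF r(1) m1(1) m1(2)] Llt by blast
        next
          case False
          then have "?Rlt m2" using R12 m2 by blast
          then show False using nB[OF m2(1) s(1) m2(3)] Lgt by blast
        qed
      qed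
    next
      case nLlt: False
      then have Rlt: "?Rlt r" using c1 by blast
      show False
      proof (cases "?Lgt s")
        case True then show False using nB[OF r(1) s(1) s(2)] Rlt by blast
      next
        case False
        then have Rgt: "?Rgt s" using c2 by blast
        show False
        proof (cases "?Llt m2")
          case True then show False using nA[OF m2(1) s(1) m2(3)] Rgt by blast
        next
          case False
          then have "?Lgt m1" using L12 m2 by blast
          then show False using nB[OF r(1) m1(1) m1(2)] Rlt by blast
        qed
      qed
    qed
  qed
  obtain D where D: "I = ereal D" using I0 IS SM by (cases I) auto
  have "(q \<longlongrightarrow> I) (at 0)"
    by (rule Liminf_eq_Limsup) (use SI IS in \<open>auto simp: I_def S_def\<close>)
  then have "((\<lambda>h. ereal (Q h)) \<longlongrightarrow> ereal D) (at 0)" using D by (simp add: q_def[abs_def])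
  then have "(Q \<longlongrightarrow> D) (at 0)" by simp
  then have "(F has_real_derivative D) (at x)" unfolding DERIV_def Q_def .
  then show ?thesis using real_differentiable_def by blast
qed



lemma freq_set_borel:
  fixes \<psi> :: "real \<Rightarrow> real \<Rightarrow> real"
  assumes c1: "\<And>h. continuous_on UNIV (\<psi> h)" and c2: "\<And>x. continuous_on {0<..} (\<lambda>h. \<psi> h x)"
  shows "{x. frequently (\<lambda>h. 0 < \<psi> h x) (at_right 0)} \<in> sets borel"
proof -
  have "{x. frequently (\<lambda>h. 0 < \<psi> h x) (at_right 0)} =
        {x. \<forall>n::nat. \<exists>h\<in>\<rat>. 0 < h \<and> h < inverse (real (Suc n)) \<and> 0 < \<psi> h x}"
    using frequently_at_right_0_rat[OF c2] by blast
  then show ?thesis using borel_rat_set[OF c1] by simp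
qed

lemma cont_shift:
  fixes F :: "real \<Rightarrow> real"
  assumes cont: "continuous_on UNIV F"
  shows "continuous_on S (\<lambda>h. F (x + h))" "continuous_on S (\<lambda>y. F (y - d))"
    "continuous_on S (\<lambda>h. F (x - h))" "continuous_on S (\<lambda>y. F (y + d))"
  by (auto intro!: continuous_on_compose2[OF cont] continuous_intros)

lemma lipschitz_ae_differentiable:
  fixes G :: "real \<Rightarrow> real"
  assumes lipG: "L-lipschitz_on UNIV G"
  shows "negligible {x. \<not> G differentiable at x}"
proof -
  have L0: "0 \<le> L" using lipG lipschitz_on_nonneg by blast
  have Gl: "\<bar>G y - G x\<bar> \<le> L * \<bar>y - x\<bar>" for x y
    using lipschitz_onD[OF lipG, of y x] by (simp add: dist_real_def)
  define M where "M = L + 1"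
  have M: "0 < M" using L0 by (simp add: M_def)
  define F where "F x = G x + M * x" for x
  have mono: "F x \<le> F y" if "x \<le> y" for x y
  proof -
    have "G x - G y \<le> L * (y - x)" using Gl[of y x] that by (simp add: abs_le_iff)
    moreover have "L * (y - x) \<le> M * (y - x)" using that by (intro mult_right_mono) (auto simp: M_def)
    ultimately show ?thesis by (simp add: F_def algebra_simps)
  qed
  have lip: "F y - F x \<le> (L + M) * (y - x)" if "x \<le> y" for x y
    using Gl[of x y] that by (simp add: F_def algebra_simps abs_le_iff)
  have LM: "0 < L + M" using L0 M by simp
  have contG: "continuous_on UNIV G" using lipschitz_on_continuous_on[OF lipG] .
  have cont: "continuous_on UNIV F" unfolding F_def[abs_def] by (intro continuous_intros contG)
  define LA where "LA r s = {x. frequently (\<lambda>h. F x - F (x - h) < r * h) (at_right (0::real))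
                              \<and> frequently (\<lambda>h. s * h < F (x + h) - F x) (at_right 0)}" for r s
  define LB where "LB r s = {x. frequently (\<lambda>h. F (x + h) - F x < r * h) (at_right (0::real))
                              \<and> frequently (\<lambda>h. s * h < F x - F (x - h)) (at_right 0)}" for r s
  have b1: "{x. frequently (\<lambda>h. F x - F (x - h) < r * h) (at_right (0::real))} \<in> sets borel" for r
  proof -
    have "{x. frequently (\<lambda>h. F x - F (x - h) < r * h) (at_right (0::real))} =
          {x. frequently (\<lambda>h. 0 < r * h - (F x - F (x + (-1) * h))) (at_right (0::real))}" by simp
    also have "\<dots> \<in> sets borel"
      by (rule freq_set_borel) (use cont in \<open>auto intro!: continuous_intros cont_shift[OF cont]\<close>)
    finally show ?thesis .
  qed
  have b2: "{x. frequently (\<lambda>h. s * h < F (x + h) - F x) (at_right (0::real))} \<in> sets borel" for s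
  proof -
    have "{x. frequently (\<lambda>h. s * h < F (x + h) - F x) (at_right (0::real))} =
          {x. frequently (\<lambda>h. 0 < F (x + 1 * h) - F x - s * h) (at_right (0::real))}" by simp
    also have "\<dots> \<in> sets borel"
      by (rule freq_set_borel) (use cont in \<open>auto intro!: continuous_intros cont_shift[OF cont]\<close>)
    finally show ?thesis .
  qed
  have b3: "{x. frequently (\<lambda>h. F (x + h) - F x < r * h) (at_right (0::real))} \<in> sets borel" for r
  proof -
    have "{x. frequently (\<lambda>h. F (x + h) - F x < r * h) (at_right (0::real))} =
          {x. frequently (\<lambda>h. 0 < r * h - (F (x + 1 * h) - F x)) (at_right (0::real))}" by simp
    also have "\<dots> \<in> sets borel"
      by (rule freq_set_borel) (use cont in \<open>auto intro!: continuous_intros cont_shift[OF cont]\<close>)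
    finally show ?thesis .
  qed
  have b4: "{x. frequently (\<lambda>h. s * h < F x - F (x - h)) (at_right (0::real))} \<in> sets borel" for s
  proof -
    have "{x. frequently (\<lambda>h. s * h < F x - F (x - h)) (at_right (0::real))} =
          {x. frequently (\<lambda>h. 0 < F x - F (x + (-1) * h) - s * h) (at_right (0::real))}" by simp
    also have "\<dots> \<in> sets borel"
      by (rule freq_set_borel) (use cont in \<open>auto intro!: continuous_intros cont_shift[OF cont]\<close>)
    finally show ?thesis .
  qed
  have LAb: "LA r s \<in> sets borel" for r s
  proof -
    have "LA r s = {x. frequently (\<lambda>h. F x - F (x - h) < r * h) (at_right (0::real))} \<inter>
                   {x. frequently (\<lambda>h. s * h < F (x + h) - F x) (at_right (0::real))}" by (auto simp: LA_def)
    then show ?thesis using b1 b2 by simp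
  qed
  have LBb: "LB r s \<in> sets borel" for r s
  proof -
    have "LB r s = {x. frequently (\<lambda>h. F (x + h) - F x < r * h) (at_right (0::real))} \<inter>
                   {x. frequently (\<lambda>h. s * h < F x - F (x - h)) (at_right (0::real))}" by (auto simp: LB_def)
    then show ?thesis using b3 b4 by simp
  qed
  have nLA: "negligible (LA r s)" if "r < s" for r s
  proof (cases "r \<le> 0")
    case True
    have "LA r s = {}"
    proof (rule ccontr)
      assume "LA r s \<noteq> {}"
      then obtain x where "frequently (\<lambda>h. F x - F (x - h) < r * h) (at_right (0::real))" by (auto simp: LA_def)
      then obtain h where h: "0 < h" "F x - F (x - h) < r * h" using frequently_at_right_0_D[of _ 1] by auto
      have "F (x - h) \<le> F x" using mono h by simp
      moreover have "r * h \<le> 0" using True h by (simp add: mult_nonpos_nonneg)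
      ultimately show False using h by simp
    qed
    then show ?thesis by simp
  next
    case False
    show ?thesis
    proof (rule null_from_V[OF mono cont lip LM LAb])
      show "0 < r" "r < s" using False that by auto
      fix x d :: real assume x: "x \<in> LA r s" and d: "0 < d"
      obtain h where h: "0 < h" "h < d" "F x - F (x - h) < r * h"
        using x frequently_at_right_0_D[OF _ d] by (auto simp: LA_def)
      show "\<exists>a b. a \<le> x \<and> x \<le> b \<and> a < b \<and> b - a < d \<and> F b - F a \<le> r * (b - a)"
        by (rule exI[of _ "x - h"], rule exI[of _ x]) (use h in auto)
      obtain h where h: "0 < h" "h < d" "s * h < F (x + h) - F x"
        using x frequently_at_right_0_D[OF _ d] by (auto simp: LA_def)
      show "\<exists>a b. a \<le> x \<and> x \<le> b \<and> a < b \<and> b - a < d \<and> s * (b - a) \<le> F b - F a"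
        by (rule exI[of _ x], rule exI[of _ "x + h"]) (use h in auto)
    qed
  qed
  have nLB: "negligible (LB r s)" if "r < s" for r s
  proof (cases "r \<le> 0")
    case True
    have "LB r s = {}"
    proof (rule ccontr)
      assume "LB r s \<noteq> {}"
      then obtain x where "frequently (\<lambda>h. F (x + h) - F x < r * h) (at_right (0::real))" by (auto simp: LB_def)
      then obtain h where h: "0 < h" "F (x + h) - F x < r * h" using frequently_at_right_0_D[of _ 1] by auto
      have "F x \<le> F (x + h)" using mono h by simp
      moreover have "r * h \<le> 0" using True h by (simp add: mult_nonpos_nonneg)
      ultimately show False using h by simp
    qed
    then show ?thesis by simp
  next
    case False
    show ?thesis
    proof (rule null_from_V[OF mono cont lip LM LBb])
      show "0 < r" "r < s" using False that by auto
      fix x d :: real assume x: "x \<in> LB r s" and d: "0 < d"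
      obtain h where h: "0 < h" "h < d" "F (x + h) - F x < r * h"
        using x frequently_at_right_0_D[OF _ d] by (auto simp: LB_def)
      show "\<exists>a b. a \<le> x \<and> x \<le> b \<and> a < b \<and> b - a < d \<and> F b - F a \<le> r * (b - a)"
        by (rule exI[of _ x], rule exI[of _ "x + h"]) (use h in auto)
      obtain h where h: "0 < h" "h < d" "s * h < F x - F (x - h)"
        using x frequently_at_right_0_D[OF _ d] by (auto simp: LB_def)
      show "\<exists>a b. a \<le> x \<and> x \<le> b \<and> a < b \<and> b - a < d \<and> s * (b - a) \<le> F b - F a"
        by (rule exI[of _ "x - h"], rule exI[of _ x]) (use h in auto)
    qed
  qed
  define P where "P = {(r::real, s::real). r \<in> \<rat> \<and> s \<in> \<rat> \<and> r < s}"
  have cP: "countable P"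
    by (rule countable_subset[of _ "\<rat> \<times> \<rat>"]) (auto simp: P_def intro: countable_SIGMA countable_rat)
  define N where "N = (\<Union>p\<in>P. LA (fst p) (snd p) \<union> LB (fst p) (snd p))"
  have nN: "negligible N" unfolding N_def
    by (rule negligible_countable_Union) (use cP nLA nLB in \<open>auto simp: P_def\<close>)
  have "{x. \<not> G differentiable at x} \<subseteq> N"
  proof
    fix x assume x: "x \<in> {x. \<not> G differentiable at x}"
    show "x \<in> N"
    proof (rule ccontr)
      assume xN: "x \<notin> N"
      have "F differentiable at x"
      proof (rule diff_point[OF mono lip])
        fix r s :: real assume "r \<in> \<rat>" "s \<in> \<rat>" "r < s"
        then have "(r, s) \<in> P" by (simp add: P_def)
        then show "\<not> (frequently (\<lambda>h. F x - F (x - h) < r * h) (at_right 0) \<and> frequently (\<lambda>h. s * h < F (x + h) - F x) (at_right 0))"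
             "\<not> (frequently (\<lambda>h. F (x + h) - F x < r * h) (at_right 0) \<and> frequently (\<lambda>h. s * h < F x - F (x - h)) (at_right 0))"
          using xN by (auto simp: N_def LA_def LB_def)
      qed
      then obtain D where "(F has_real_derivative D) (at x)" using real_differentiable_def by blast
      then have "((\<lambda>y. F y - M * y) has_real_derivative (D - M)) (at x)"
        by (auto intro!: derivative_eq_intros)
      then have "(\<lambda>y. F y - M * y) differentiable at x" using real_differentiable_def by blast
      moreover have "(\<lambda>y. F y - M * y) = G" by (simp add: F_def)
      ultimately show False using x by simp
    qed
  qed
  then show ?thesis using nN negligible_subset by blast
qed



lemma antideriv_exists:
  fixes G :: "real \<Rightarrow> real"
  assumes cont: "continuous_on UNIV G"
  shows "\<exists>\<Phi>. \<forall>t\<in>{c<..<d}. (\<Phi> has_real_derivative G t) (at t)"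
proof -
  have "((\<lambda>x. integral {c..x} G) has_real_derivative G t) (at t)" if t: "t \<in> {c<..<d}" for t
  proof -
    have "((\<lambda>x. integral {c..x} G) has_real_derivative G t) (at t within {c..d})"
      by (rule integral_has_real_derivative) (use cont t in \<open>auto intro: continuous_on_subset\<close>)
    moreover have "at t within {c..d} = at t"
      by (rule at_within_interior) (use t in auto)
    ultimately show ?thesis by simp
  qed
  then show ?thesis by blast
qed

lemma seq_to_at0: "filterlim (\<lambda>k. inverse (real (Suc k))) (at (0::real)) sequentially"
  unfolding filterlim_at using LIMSEQ_inverse_real_of_nat by auto

lemma lipschitz_ftc_UNIV:
  fixes G :: "real \<Rightarrow> real"
  assumes lipG: "L-lipschitz_on UNIV G" and ab: "a \<le> b"
  shows "(deriv G has_integral (G b - G a)) {a..b}"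
proof -
  have L0: "0 \<le> L" using lipG lipschitz_on_nonneg by blast
  have Gl: "\<bar>G y - G x\<bar> \<le> L * \<bar>y - x\<bar>" for x y
    using lipschitz_onD[OF lipG, of y x] by (simp add: dist_real_def)
  have contG: "continuous_on UNIV G" using lipschitz_on_continuous_on[OF lipG] .
  define N where "N = {x. \<not> G differentiable at x}"
  have nN: "negligible N" unfolding N_def by (rule lipschitz_ae_differentiable[OF lipG])
  define S where "S = {a..b} - N"
  have negS: "negligible {x \<in> {a..b} - S. f x \<noteq> 0}" "negligible {x \<in> S - {a..b}. f x \<noteq> 0}" for f :: "real \<Rightarrow> real"
    using nN by (auto simp: S_def intro: negligible_subset)
  define hk where "hk k = inverse (real (Suc k))" for k
  have hk: "0 < hk k" "hk k \<le> 1" for k by (auto simp: hk_def field_simps)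
  define f where "f k t = (G (t + hk k) - G t) / hk k" for k t
  obtain \<Phi> where \<Phi>: "\<And>t. t \<in> {a - 1<..<b + 2} \<Longrightarrow> (\<Phi> has_real_derivative G t) (at t)"
    using antideriv_exists[OF contG, of "a - 1" "b + 2"] by blast
  have fint: "f k integrable_on {a..b}" for k
    unfolding f_def by (intro integrable_continuous_interval continuous_intros cont_shift[OF contG] continuous_on_subset[OF contG]) (use hk[of k] in auto)
  have fintS: "f k integrable_on S" for k by (rule integrable_spike_set[OF fint negS])
  have cintS: "(\<lambda>_. L) integrable_on S"
    by (rule integrable_spike_set[OF integrable_const_ivl negS])
  have fle: "norm (f k t) \<le> L" for k t
  proof -
    have "\<bar>G (t + hk k) - G t\<bar> \<le> L * hk k" using Gl[of t "t + hk k"] hk[of k] by simp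
    then show ?thesis using hk[of k] by (simp add: f_def abs_divide pos_divide_le_eq)
  qed
  have conv: "(\<lambda>k. f k t) \<longlonglongrightarrow> deriv G t" if t: "t \<in> S" for t
  proof -
    have "DERIV G t :> deriv G t" using t by (simp add: S_def N_def DERIV_deriv_iff_real_differentiable)
    then have "((\<lambda>h. (G (t + h) - G t) / h) \<longlongrightarrow> deriv G t) (at 0)" by (simp add: DERIV_def)
    from filterlim_compose[OF this seq_to_at0] show ?thesis by (simp add: f_def hk_def o_def)
  qed
  have DC: "deriv G integrable_on S" "(\<lambda>k. integral S (f k)) \<longlonglongrightarrow> integral S (deriv G)"
    using dominated_convergence[OF fintS cintS _ conv] fle by auto
  have intG: "(G has_integral (\<Phi> b - \<Phi> a)) {a..b}"
  proof (rule fundamental_theorem_of_calculus[OF ab])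
    fix x assume "x \<in> {a..b}"
    then have "(\<Phi> has_real_derivative G x) (at x)" using \<Phi> by auto
    then show "(\<Phi> has_vector_derivative G x) (at x within {a..b})"
      by (simp add: has_real_derivative_iff_has_vector_derivative has_vector_derivative_at_within)
  qed
  have intGh: "((\<lambda>t. G (t + hk k)) has_integral (\<Phi> (b + hk k) - \<Phi> (a + hk k))) {a..b}" for k
  proof (rule fundamental_theorem_of_calculus[OF ab, of "\<lambda>t. \<Phi> (t + hk k)"])
    fix x assume x: "x \<in> {a..b}"
    then have "(\<Phi> has_real_derivative G (x + hk k)) (at (x + hk k))" using \<Phi> hk[of k] by auto
    then have "((\<lambda>t. \<Phi> (t + hk k)) has_real_derivative G (x + hk k) * 1) (at x)"
      by (intro DERIV_chain2[of \<Phi>]) (auto intro!: derivative_eq_intros)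
    then show "((\<lambda>t. \<Phi> (t + hk k)) has_vector_derivative G (x + hk k)) (at x within {a..b})"
      by (simp add: has_real_derivative_iff_has_vector_derivative has_vector_derivative_at_within)
  qed
  have intf: "integral S (f k) = (\<Phi> (b + hk k) - \<Phi> b) / hk k - (\<Phi> (a + hk k) - \<Phi> a) / hk k" for k
  proof -
    have "(f k has_integral ((\<Phi> (b + hk k) - \<Phi> (a + hk k)) - (\<Phi> b - \<Phi> a)) / hk k) {a..b}"
      unfolding f_def using has_integral_divide[OF has_integral_diff[OF intGh intG]] by simp
    then have "(f k has_integral ((\<Phi> (b + hk k) - \<Phi> (a + hk k)) - (\<Phi> b - \<Phi> a)) / hk k) S"
      using has_integral_spike_set_eq[OF negS] by blast
    then show ?thesis by (simp add: integral_unique diff_divide_distrib)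
  qed
  have lim1: "(\<lambda>k. (\<Phi> (c + hk k) - \<Phi> c) / hk k) \<longlonglongrightarrow> G c" if c: "c \<in> {a..b}" for c
  proof -
    have "DERIV \<Phi> c :> G c" using \<Phi> c by auto
    then have "((\<lambda>h. (\<Phi> (c + h) - \<Phi> c) / h) \<longlongrightarrow> G c) (at 0)" by (simp add: DERIV_def)
    from filterlim_compose[OF this seq_to_at0] show ?thesis by (simp add: hk_def o_def)
  qed
  have "(\<lambda>k. integral S (f k)) \<longlonglongrightarrow> G b - G a"
    unfolding intf by (intro tendsto_diff lim1) (use ab in auto)
  then have "integral S (deriv G) = G b - G a" using DC(2) LIMSEQ_unique by blast
  then have "(deriv G has_integral (G b - G a)) S" using DC(1) by (metis integrable_integral)
  then show ?thesis using has_integral_spike_set_eq[OF negS] by blast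
qed


lemma lipschitz_ftc:
  fixes g :: "real \<Rightarrow> real"
  assumes lip: "L-lipschitz_on {a..b} g" and ab: "a \<le> b"
  shows "(deriv g has_integral (g b - g a)) {a..b}"
proof -
  define cl where "cl t = max a (min b t)" for t
  define G where "G t = g (cl t)" for t
  have clab: "cl t \<in> {a..b}" for t using ab by (auto simp: cl_def)
  have cld: "dist (cl x) (cl y) \<le> dist x y" for x y
    by (auto simp: cl_def dist_real_def)
  have L0: "0 \<le> L" using lip lipschitz_on_nonneg by blast
  have lipG: "L-lipschitz_on UNIV G"
  proof (rule lipschitz_onI)
    fix x y :: real
    have "dist (G x) (G y) \<le> L * dist (cl x) (cl y)"
      unfolding G_def by (rule lipschitz_onD[OF lip clab clab])
    also have "\<dots> \<le> L * dist x y" by (rule mult_left_mono[OF cld L0])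
    finally show "dist (G x) (G y) \<le> L * dist x y" .
  qed (rule L0)
  have "(deriv G has_integral (G b - G a)) {a..b}" by (rule lipschitz_ftc_UNIV[OF lipG ab])
  moreover have "G b = g b" "G a = g a" using ab by (auto simp: G_def cl_def)
  moreover have "deriv g t = deriv G t" if "t \<in> {a..b} - {a, b}" for t
  proof (rule deriv_cong_ev)
    have t: "a < t" "t < b" using that by auto
    have "eventually (\<lambda>x. x \<in> {a<..<b}) (nhds t)"
      by (rule eventually_nhds_in_open) (use t in auto)
    then show "eventually (\<lambda>x. g x = G x) (nhds t)"
      by eventually_elim (auto simp: G_def cl_def)
  qed simp
  ultimately show ?thesis
    using has_integral_spike_finite_eq[of "{a, b}" "{a..b}" "deriv g" "deriv G"] by auto
qed



lemma sep_const:
  fixes K K' :: "'a::metric_space set"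
  assumes "compact K" "K \<noteq> {}" "closed K'" "K' \<noteq> {}" "K \<inter> K' = {}"
  shows "\<exists>\<delta>>0. \<forall>z\<in>K. \<delta> \<le> infdist z K'"
proof -
  have "continuous_on K (\<lambda>z. infdist z K')" by (intro continuous_intros)
  then obtain z0 where z0: "z0 \<in> K" "\<And>z. z \<in> K \<Longrightarrow> infdist z0 K' \<le> infdist z K'"
    using continuous_attains_inf[OF assms(1,2)] by blast
  have "infdist z0 K' > 0" using z0(1) assms by (intro infdist_pos_not_in_closed) auto
  then show ?thesis using z0 by blast
qed

lemma lipschitz_min_infdist:
  fixes K :: "'a::metric_space set"
  shows "1-lipschitz_on UNIV (\<lambda>z. min \<delta> (infdist z K))"
proof (rule lipschitz_onI)
  fix x y :: 'a
  have "\<bar>min \<delta> (infdist x K) - min \<delta> (infdist y K)\<bar> \<le> \<bar>infdist x K - infdist y K\<bar>" by linarith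
  also have "\<dots> \<le> dist x y" by (rule infdist_triangle_abs)
  finally show "dist (min \<delta> (infdist x K)) (min \<delta> (infdist y K)) \<le> 1 * dist x y" by (simp add: dist_real_def)
qed simp

lemma deriv_locally_const:
  fixes g :: "real \<Rightarrow> real"
  assumes "open U" "t \<in> U" "\<And>x. x \<in> U \<Longrightarrow> g x = c"
  shows "deriv g t = 0"
proof -
  have "eventually (\<lambda>x. x \<in> U) (nhds t)" using assms by (intro eventually_nhds_in_open)
  then have "eventually (\<lambda>x. g x = (\<lambda>_. c) x) (nhds t)" by eventually_elim (use assms in auto)
  then have "deriv g t = deriv (\<lambda>_. c) t" by (rule deriv_cong_ev) simp
  then show ?thesis by simp
qed

theorem lemma9:
  fixes \<gamma> :: "real \<Rightarrow> 'a::metric_space"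
  assumes closed: "\<gamma> 0 = \<gamma> (2*pi)"
    and inj: "inj_on \<gamma> {0..<2*pi}"
    and lip: "\<exists>L. L-lipschitz_on {0..2*pi} \<gamma>"
  shows "\<exists>(\<pi> :: 'a \<Rightarrow> real \<times> real) L. L-lipschitz_on UNIV \<pi> \<and> signed_area (\<pi> \<circ> \<gamma>) \<noteq> 0"
proof -
  obtain L where L: "L-lipschitz_on {0..2*pi} \<gamma>" using lip by blast
  have contg: "continuous_on {0..2*pi} \<gamma>" using lipschitz_on_continuous_on[OF L] .
  define p where "p = pi"
  have p: "0 < p" by (simp add: p_def)
  define K1 where "K1 = \<gamma> ` {0..p/2}"
  define K2 where "K2 = \<gamma> ` {p/2..p}"
  define K3 where "K3 = \<gamma> ` {p..3*p/2}"
  define K4 where "K4 = \<gamma> ` {3*p/2..2*p}"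
  have cpt: "compact (\<gamma> ` {u..v})" if "0 \<le> u" "v \<le> 2*p" for u v
    by (rule compact_continuous_image) (use that in \<open>auto intro: continuous_on_subset[OF contg] simp: p_def\<close>)
  have K1c: "compact K1" "K1 \<noteq> {}" unfolding K1_def using p by (auto intro!: cpt)
  have K2c: "compact K2" "K2 \<noteq> {}" unfolding K2_def using p by (auto intro!: cpt)
  have K3c: "compact K3" "K3 \<noteq> {}" unfolding K3_def using p by (auto intro!: cpt)
  have K4c: "compact K4" "K4 \<noteq> {}" unfolding K4_def using p by (auto intro!: cpt)
  have inj': "\<gamma> s = \<gamma> t \<Longrightarrow> s \<in> {0..<2*p} \<Longrightarrow> t \<in> {0..<2*p} \<Longrightarrow> s = t" for s t
    using inj by (auto simp: p_def inj_on_def)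
  have d13: "K1 \<inter> K3 = {}"
  proof -
    { fix s t assume s: "s \<in> {0..p/2}" and t: "t \<in> {p..3*p/2}" and e: "\<gamma> s = \<gamma> t"
      then have "s = t" using p by (intro inj'[OF e]) auto
      then have False using s t p by auto }
    then show ?thesis unfolding K1_def K3_def by blast
  qed
  have d24: "K2 \<inter> K4 = {}"
  proof -
    { fix s t assume s: "s \<in> {p/2..p}" and t: "t \<in> {3*p/2..2*p}" and e: "\<gamma> s = \<gamma> t"
      have False
      proof (cases "t = 2*p")
        case True
        then have "\<gamma> s = \<gamma> 0" using e closed by (simp add: p_def)
        then have "s = 0" using s p by (intro inj') auto
        then show False using s p by auto
      next
        case False
        then have "s = t" using s t p by (intro inj'[OF e]) auto
        then show False using s t p by auto
      qed }
    then show ?thesis unfolding K2_def K4_def by blast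
  qed
  obtain \<delta>1 where \<delta>1: "\<delta>1 > 0" "\<And>z. z \<in> K1 \<Longrightarrow> \<delta>1 \<le> infdist z K3"
    using sep_const[OF K1c compact_imp_closed[OF K3c(1)] K3c(2) d13] by blast
  obtain \<delta>2 where \<delta>2: "\<delta>2 > 0" "\<And>z. z \<in> K2 \<Longrightarrow> \<delta>2 \<le> infdist z K4"
    using sep_const[OF K2c compact_imp_closed[OF K4c(1)] K4c(2) d24] by blast
  define \<pi> where "\<pi> z = (min \<delta>1 (infdist z K3), min \<delta>2 (infdist z K4))" for z
  have lippi: "(sqrt (1\<^sup>2 + 1\<^sup>2))-lipschitz_on UNIV \<pi>"
    unfolding \<pi>_def by (intro lipschitz_on_Pair lipschitz_min_infdist)
  define f where "f t = min \<delta>1 (infdist (\<gamma> t) K3)" for t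
  define g where "g t = min \<delta>2 (infdist (\<gamma> t) K4)" for t
  have area: "signed_area (\<pi> \<circ> \<gamma>) = integral {0..2*p} (\<lambda>t. f t * deriv g t)"
    by (simp add: signed_area_def \<pi>_def f_def g_def[abs_def] o_def p_def)
  have f1: "f t = \<delta>1" if "t \<in> {0..p/2}" for t
    using \<delta>1(2)[of "\<gamma> t"] that by (auto simp: f_def K1_def)
  have f3: "f t = 0" if "t \<in> {p..3*p/2}" for t
    using \<delta>1(1) that by (auto simp: f_def K3_def)
  have g2: "g t = \<delta>2" if "t \<in> {p/2..p}" for t
    using \<delta>2(2)[of "\<gamma> t"] that by (auto simp: g_def K2_def)
  have g4: "g t = 0" if "t \<in> {3*p/2..2*p}" for t
    using \<delta>2(1) that by (auto simp: g_def K4_def)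
  have g0: "g 0 = 0"
  proof -
    have "\<gamma> 0 \<in> K4" unfolding K4_def using closed p by (auto simp: p_def intro!: image_eqI[of _ _ "2*p"])
    then show ?thesis using \<delta>2(1) by (simp add: g_def)
  qed
  have lipg: "L-lipschitz_on {0..p/2} g"
  proof -
    have "(1 * L)-lipschitz_on {0..p/2} ((\<lambda>z. min \<delta>2 (infdist z K4)) \<circ> \<gamma>)"
      by (rule lipschitz_on_compose[OF lipschitz_on_subset[OF L] lipschitz_on_subset[OF lipschitz_min_infdist]])
         (use p in \<open>auto simp: p_def\<close>)
    then show ?thesis by (simp add: g_def[abs_def] o_def)
  qed
  have I1: "(deriv g has_integral (g (p/2) - g 0)) {0..p/2}"
    by (rule lipschitz_ftc[OF lipg]) (use p in auto)
  have I1': "((\<lambda>t. \<delta>1 * deriv g t) has_integral \<delta>1 * \<delta>2) {0..p/2}"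
    using has_integral_mult_right[OF I1, of \<delta>1] g0 g2[of "p/2"] p by simp
  have I2: "((\<lambda>t. if t \<in> {0..p/2} then \<delta>1 * deriv g t else 0) has_integral \<delta>1 * \<delta>2) {0..2*p}"
    using has_integral_restrict_closed_subinterval[of "\<lambda>t. \<delta>1 * deriv g t" "\<delta>1 * \<delta>2" "0::real" "p/2" 0 "2*p"] I1' p
    by auto
  have eqf: "f t * deriv g t = (if t \<in> {0..p/2} then \<delta>1 * deriv g t else 0)" if t: "t \<in> {0..2*p} - {2*p}" for t
  proof -
    consider "t \<in> {0..p/2}" | "t \<in> {p/2<..<p}" | "t \<in> {p..3*p/2}" | "t \<in> {3*p/2<..<2*p}"
      using t by fastforce
    then show ?thesis
    proof cases
      case 1 then show ?thesis using f1 by simp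
    next
      case 2
      have "deriv g t = 0" by (rule deriv_locally_const[where U="{p/2<..<p}" and c=\<delta>2]) (use 2 g2 in auto)
      then show ?thesis using 2 by simp
    next
      case 3 then show ?thesis using f3 p by auto
    next
      case 4
      have "deriv g t = 0" by (rule deriv_locally_const[where U="{3*p/2<..<2*p}" and c=0]) (use 4 g4 in auto)
      then show ?thesis using 4 p by auto
    qed
  qed
  have "((\<lambda>t. f t * deriv g t) has_integral \<delta>1 * \<delta>2) {0..2*p}"
    using has_integral_spike_finite_eq[of "{2*p}" "{0..2*p}" "\<lambda>t. if t \<in> {0..p/2} then \<delta>1 * deriv g t else 0" "\<lambda>t. f t * deriv g t"] I2 eqf
    by auto
  then have "signed_area (\<pi> \<circ> \<gamma>) = \<delta>1 * \<delta>2" using area by (simp add: integral_unique)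
  then have "signed_area (\<pi> \<circ> \<gamma>) \<noteq> 0" using \<delta>1(1) \<delta>2(1) by simp
  then show ?thesis using lippi by blast
qed

end
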